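(* Let $D$ be a euclidean polygon with a straight triangulation $\mathcal{T}$, and let $k\ge0$ be an integer. Let $P$ be a set of at most $2^k$ points in $D$. Then there is a realisation of $\mathcal{T}^{(k+1)}$ as a straight triangulation of $D$ that contains $P$ in its vertex set.
   Context: A triangulation of a subset of euclidean space is straight if the inclusion of each simplex is an affine map. $\mathcal{T}^{(n)}$ denotes the $n$-fold iterated barycentric subdivision; a realisation of it as a straight triangulation of $D$ is a straight triangulation of $D$ subdividing $\mathcal{T}$ that is combinatorially the $n$-fold barycentric subdivision, the new vertex of each subdivided simplex being placed at some (not necessarily barycentric) point of its interior. *)

theory Defs
  imports "HOL-Analysis.Analysis"
begin

text \<open>A euclidean polygon: a compact region of the plane bounded by a simple closed
polygonal curve, i.e. a set homeomorphic to the closed disc (polygonality of the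
boundary is then supplied by the straight triangulation in the hypothesis).\<close>
definition euclidean_polygon :: "(real^2) set \<Rightarrow> bool" where
  "euclidean_polygon D \<longleftrightarrow> D homeomorphic cball (0::real^2) 1"

text \<open>Simplices are represented by their point sets (convex hulls of affinely independent
vertex sets); the complex is closed under faces (and contains the empty face).\<close>
definition straight_triangulation :: "'a::euclidean_space set set \<Rightarrow> 'a set \<Rightarrow> bool" where
  "straight_triangulation \<T> D \<longleftrightarrow> simplicial_complex \<T> \<and> \<Union>\<T> = D"

definition tri_vertices :: "'a::euclidean_space set set \<Rightarrow> 'a set" where
  "tri_vertices \<T> = {x. {x} \<in> \<T>}"

text \<open>S is a realisation of the (first) barycentric subdivision of T: a new vertex c(s) is
placed at some point of the relative interior of each nonempty simplex s of T, and the
simplices of S are the convex hulls of c applied to chains s0 < s1 < ... of simplices of T.\<close>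
definition derived_subdivision :: "'a::euclidean_space set set \<Rightarrow> 'a set set \<Rightarrow> bool" where
  "derived_subdivision \<T> \<S> \<longleftrightarrow>
     (\<exists>c. (\<forall>s\<in>\<T>. s \<noteq> {} \<longrightarrow> c s \<in> rel_interior s) \<and>
          \<S> = {convex hull (c ` F) | F. F \<subseteq> \<T> - {{}} \<and>
                                       (\<forall>A\<in>F. \<forall>B\<in>F. A \<subseteq> B \<or> B \<subseteq> A)}) \<and>
     straight_triangulation \<S> (\<Union>\<T>)"

fun realises_iterated_bsd :: "'a::euclidean_space set set \<Rightarrow> nat \<Rightarrow> 'a set set \<Rightarrow> bool" where
  "realises_iterated_bsd \<T> 0 \<S> = (\<S> = \<T>)"
| "realises_iterated_bsd \<T> (Suc n) \<S> =
     (\<exists>\<R>. realises_iterated_bsd \<T> n \<R> \<and> derived_subdivision \<R> \<S>)"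

end

theory Submission
  imports Defs
begin

definition is_chain :: "'a set set \<Rightarrow> bool" where
  "is_chain F \<longleftrightarrow> (\<forall>A\<in>F. \<forall>B\<in>F. A \<subseteq> B \<or> B \<subseteq> A)"

definition Sd :: "('a::euclidean_space set \<Rightarrow> 'a) \<Rightarrow> 'a set set \<Rightarrow> 'a set set" where
  "Sd c K = {convex hull (c ` F) | F. F \<subseteq> K - {{}} \<and> (\<forall>A\<in>F. \<forall>B\<in>F. A \<subseteq> B \<or> B \<subseteq> A)}"

lemma chain_top:
  assumes "finite F" "F \<noteq> {}" "is_chain F"
  shows "\<exists>t\<in>F. \<forall>s\<in>F. s \<subseteq> t"
  using assms
proof (induction F rule: finite_ne_induct)
  case (singleton x)
  then show ?case by auto
next
  case (insert x F)
  then have "is_chain F" by (auto simp: is_chain_def)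
  with insert obtain t where t: "t \<in> F" "\<forall>s\<in>F. s \<subseteq> t" by auto
  have "x \<subseteq> t \<or> t \<subseteq> x" using insert.prems t(1) unfolding is_chain_def by blast
  then show ?case using t by auto
qed

lemma is_chain_subset: "is_chain F \<Longrightarrow> G \<subseteq> F \<Longrightarrow> is_chain G"
  by (auto simp: is_chain_def)

locale dsub =
  fixes K :: "'a::euclidean_space set set" and c :: "'a set \<Rightarrow> 'a"
  assumes sc: "simplicial_complex K"
    and cin: "\<And>s. s \<in> K \<Longrightarrow> s \<noteq> {} \<Longrightarrow> c s \<in> rel_interior s"
begin

lemma finK: "finite K" using sc by (simp add: simplicial_complex_def)

lemma simpK: "s \<in> K \<Longrightarrow> \<exists>n. n simplex s" using sc by (simp add: simplicial_complex_def)

lemma convexK: "s \<in> K \<Longrightarrow> convex s"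
  using simpK convex_simplex by blast

lemma compactK: "s \<in> K \<Longrightarrow> compact s"
  using simpK compact_simplex by blast

lemma polytopeK: "s \<in> K \<Longrightarrow> polytope s"
  using simpK simplex_imp_polytope by blast

lemma faceK: "s \<in> K \<Longrightarrow> f face_of s \<Longrightarrow> f \<in> K"
  using sc by (auto simp: simplicial_complex_def)

lemma intK: "s \<in> K \<Longrightarrow> t \<in> K \<Longrightarrow> (s \<inter> t) face_of s"
  using sc by (auto simp: simplicial_complex_def)

lemma sub_face: "s \<in> K \<Longrightarrow> t \<in> K \<Longrightarrow> s \<subseteq> t \<Longrightarrow> s face_of t"
  using intK[of t s] by (simp add: Int_absorb1)

lemma cK: "s \<in> K \<Longrightarrow> s \<noteq> {} \<Longrightarrow> c s \<in> s"
  using cin rel_interior_subset by blast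

definition chainK where "chainK F \<longleftrightarrow> F \<subseteq> K - {{}} \<and> is_chain F"

lemma chainK_finite: "chainK F \<Longrightarrow> finite F"
  using finK by (auto simp: chainK_def intro: finite_subset)

lemma chainK_sub: "chainK F \<Longrightarrow> G \<subseteq> F \<Longrightarrow> chainK G"
  unfolding chainK_def is_chain_def by blast

lemma Sd_eq: "Sd c K = {convex hull (c ` F) | F. chainK F}"
  by (simp add: Sd_def chainK_def is_chain_def)

lemma chainK_top_ex:
  assumes "chainK F" "F \<noteq> {}"
  shows "\<exists>t\<in>F. \<forall>s\<in>F. s \<subseteq> t"
proof -
  have "finite F" using assms(1) by (rule chainK_finite)
  then show ?thesis using chain_top[of F] assms unfolding chainK_def by blast
qed

lemma chainK_top:
  assumes "chainK F" "F \<noteq> {}"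
  obtains t where "t \<in> F" "\<And>s. s \<in> F \<Longrightarrow> s \<subseteq> t"
  using chainK_top_ex[OF assms] by blast

lemma hull_sub_top:
  assumes "chainK F" "t \<in> F" "\<And>s. s \<in> F \<Longrightarrow> s \<subseteq> t"
  shows "convex hull (c ` F) \<subseteq> t"
proof (rule hull_minimal)
  have "F \<subseteq> K - {{}}" using assms(1) by (simp add: chainK_def)
  then show "c ` F \<subseteq> t" using assms(3) cK by blast
  show "convex t" using assms(1,2) convexK unfolding chainK_def by blast
qed

lemma below_top:
  assumes "chainK F" "t \<in> F" "\<And>s. s \<in> F \<Longrightarrow> s \<subseteq> t" "s \<in> F" "s \<noteq> t"
  shows "s face_of t" "s \<subseteq> rel_frontier t" "affine hull s \<inter> rel_interior t = {}"
proof -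
  show sf: "s face_of t" using assms sub_face[of s t] unfolding chainK_def by blast
  show "s \<subseteq> rel_frontier t" using face_of_subset_rel_frontier[OF sf] assms by auto
  show "affine hull s \<inter> rel_interior t = {}"
    using affine_hull_face_of_disjoint_rel_interior[OF _ sf] assms convexK by (auto simp: chainK_def)
qed

lemma hull_rest_frontier:
  assumes "chainK F" "t \<in> F" "\<And>s. s \<in> F \<Longrightarrow> s \<subseteq> t"
  shows "convex hull (c ` (F - {t})) \<subseteq> rel_frontier t"
proof (cases "F - {t} = {}")
  case True then show ?thesis unfolding True by simp
next
  case False
  have ch: "chainK (F - {t})" using assms chainK_sub by blast
  from chainK_top_ex[OF ch False] obtain g where g_1: "g \<in> F - {t}" and g_2: "\<forall>s\<in>F - {t}. s \<subseteq> g" ..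
  have g: "g \<in> F - {t}" "\<And>s. s \<in> F - {t} \<Longrightarrow> s \<subseteq> g" using g_1 g_2 by auto
  have "convex hull (c ` (F - {t})) \<subseteq> g" using hull_sub_top[OF ch g] .
  also have "g \<subseteq> rel_frontier t" using below_top(2)[OF assms, of g] g by auto
  finally show ?thesis .
qed

lemma hull_rest_affine:
  assumes "chainK F" "t \<in> F" "\<And>s. s \<in> F \<Longrightarrow> s \<subseteq> t"
  shows "c t \<notin> affine hull (c ` (F - {t}))"
proof (cases "F - {t} = {}")
  case True then show ?thesis unfolding True by simp
next
  case False
  have ch: "chainK (F - {t})" using assms chainK_sub by blast
  from chainK_top_ex[OF ch False] obtain g where g_1: "g \<in> F - {t}" and g_2: "\<forall>s\<in>F - {t}. s \<subseteq> g" ..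
  have g: "g \<in> F - {t}" "\<And>s. s \<in> F - {t} \<Longrightarrow> s \<subseteq> g" using g_1 g_2 by auto
  have "c ` (F - {t}) \<subseteq> convex hull (c ` (F - {t}))" by (rule hull_subset)
  also have "\<dots> \<subseteq> g" using hull_sub_top[OF ch g] .
  finally have "c ` (F - {t}) \<subseteq> g" .
  then have "affine hull (c ` (F - {t})) \<subseteq> affine hull g" by (rule hull_mono)
  moreover have "affine hull g \<inter> rel_interior t = {}" using below_top(3)[OF assms, of g] g by auto
  moreover have "c t \<in> rel_interior t" using assms(1,2) cin unfolding chainK_def by blast
  ultimately show ?thesis by blast
qed

lemma chain_indep: "chainK F \<Longrightarrow> \<not> affine_dependent (c ` F)"
proof (induction "card F" arbitrary: F rule: less_induct)
  case less
  show ?case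
  proof (cases "F = {}")
    case True then show ?thesis unfolding True by simp
  next
    case False
    from chainK_top_ex[OF less.prems False] obtain t where t_1: "t \<in> F" and t_2: "\<forall>s\<in>F. s \<subseteq> t" ..
    have t: "t \<in> F" "\<And>s. s \<in> F \<Longrightarrow> s \<subseteq> t" using t_1 t_2 by auto
    have ch: "chainK (F - {t})" using less.prems chainK_sub by blast
    have "card (F - {t}) < card F" using t chainK_finite[OF less.prems] by (meson card_Diff1_less)
    then have "\<not> affine_dependent (c ` (F - {t}))" using less.hyps ch by blast
    moreover have "c t \<notin> affine hull (c ` (F - {t}))" using hull_rest_affine[OF less.prems t] .
    ultimately have "\<not> affine_dependent (insert (c t) (c ` (F - {t})))"
      by (rule affine_independent_insert)
    moreover have "insert (c t) (c ` (F - {t})) = c ` F" using t by auto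
    ultimately show ?thesis by simp
  qed
qed

end

context dsub
begin

lemma hull_split:
  assumes "t \<in> F"
  shows "convex hull (c ` F) = convex hull (insert (c t) (convex hull (c ` (F - {t}))))"
proof -
  have "c ` F = insert (c t) (c ` (F - {t}))" using assms by auto
  then show ?thesis by (metis hull_insert)
qed

lemma top_unique_or_disj:
  assumes "t \<in> K" "t' \<in> K" "t \<noteq> t'"
  shows "t \<inter> rel_interior t' = {} \<or> t' \<inter> rel_interior t = {}"
proof (rule ccontr)
  assume "\<not> ?thesis"
  then have a: "t \<inter> rel_interior t' \<noteq> {}" and b: "t' \<inter> rel_interior t \<noteq> {}" by auto
  have "(t \<inter> t') \<inter> rel_interior t \<noteq> {}" using b rel_interior_subset by blast
  then have "t \<subseteq> t \<inter> t'" using subset_of_face_of[OF intK[OF assms(1,2)], of t] by blast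
  moreover have "(t' \<inter> t) \<inter> rel_interior t' \<noteq> {}" using a rel_interior_subset by blast
  then have "t' \<subseteq> t' \<inter> t" using subset_of_face_of[OF intK[OF assms(2,1)], of t'] by blast
  ultimately show False using assms(3) by blast
qed

lemma chainK_mem: "chainK F \<Longrightarrow> t \<in> F \<Longrightarrow> t \<in> K \<and> t \<noteq> {}"
  by (auto simp: chainK_def)

lemma rel_int_ne: "t \<in> K \<Longrightarrow> t \<noteq> {} \<Longrightarrow> rel_interior t \<noteq> {}"
  using convexK rel_interior_eq_empty by blast

lemma Int_chain:
  "chainK F \<Longrightarrow> chainK F' \<Longrightarrow>
     convex hull (c ` F) \<inter> convex hull (c ` F') = convex hull (c ` (F \<inter> F'))"
proof (induction "card F + card F'" arbitrary: F F' rule: less_induct)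
  case less
  show ?case
  proof (cases "F = {} \<or> F' = {}")
    case True then show ?thesis by auto
  next
    case False
    then have ne: "F \<noteq> {}" "F' \<noteq> {}" by auto
    from chainK_top_ex[OF less.prems(1) ne(1)] obtain t where t_1: "t \<in> F" and t_2: "\<forall>s\<in>F. s \<subseteq> t" ..
    have t: "t \<in> F" "\<And>s. s \<in> F \<Longrightarrow> s \<subseteq> t" using t_1 t_2 by auto
    from chainK_top_ex[OF less.prems(2) ne(2)] obtain t' where t'_1: "t' \<in> F'" and t'_2: "\<forall>s\<in>F'. s \<subseteq> t'" ..
    have t': "t' \<in> F'" "\<And>s. s \<in> F' \<Longrightarrow> s \<subseteq> t'" using t'_1 t'_2 by auto
    have fin: "finite F" "finite F'" using chainK_finite less.prems by auto
    have chG: "chainK (F - {t})" using less.prems(1) chainK_sub by blast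
    have chG': "chainK (F' - {t'})" using less.prems(2) chainK_sub by blast
    have cG: "card (F - {t}) < card F" using t fin by (meson card_Diff1_less)
    have cG': "card (F' - {t'}) < card F'" using t' fin by (meson card_Diff1_less)
    have tK: "t \<in> K" "t \<noteq> {}" using chainK_mem[OF less.prems(1) t(1)] by auto
    have tK': "t' \<in> K" "t' \<noteq> {}" using chainK_mem[OF less.prems(2) t'(1)] by auto
    have XF: "convex hull (c ` F) \<subseteq> t" using hull_sub_top[OF less.prems(1) t] .
    have XF': "convex hull (c ` F') \<subseteq> t'" using hull_sub_top[OF less.prems(2) t'] .
    have XG: "convex hull (c ` (F - {t})) \<subseteq> rel_frontier t" using hull_rest_frontier[OF less.prems(1) t] .
    have XG': "convex hull (c ` (F' - {t'})) \<subseteq> rel_frontier t'" using hull_rest_frontier[OF less.prems(2) t'] .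
    have XGt: "convex hull (c ` (F - {t})) \<subseteq> t"
      using XG compactK[OF tK(1)] by (metis Diff_subset compact_imp_closed closure_closed rel_frontier_def subset_trans)
    have XGt': "convex hull (c ` (F' - {t'})) \<subseteq> t'"
      using XG' compactK[OF tK'(1)] by (metis Diff_subset compact_imp_closed closure_closed rel_frontier_def subset_trans)
    have ct: "c t \<in> rel_interior t" using cin tK by blast
    have ct': "c t' \<in> rel_interior t'" using cin tK' by blast
    show ?thesis
    proof (cases "t = t'")
      case True
      have "convex hull (c ` F) \<inter> convex hull (c ` F') =
            convex hull (insert (c t) (convex hull (c ` (F - {t})))) \<inter>
            convex hull (insert (c t) (convex hull (c ` (F' - {t}))))"
        using hull_split[OF t(1)] hull_split[OF t'(1)] True by simp
      also have "\<dots> = convex hull (insert (c t) (convex hull (c ` (F - {t})) \<inter> convex hull (c ` (F' - {t}))))"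
        by (rule convex_hull_insert_Int_eq[OF ct XG]) (use XG' True convexK[OF tK(1)] in auto)
      also have "convex hull (c ` (F - {t})) \<inter> convex hull (c ` (F' - {t})) = convex hull (c ` ((F - {t}) \<inter> (F' - {t})))"
        using less.hyps[OF _ chG, of "F' - {t}"] chG' cG cG' True by simp
      also have "convex hull (insert (c t) (convex hull (c ` ((F - {t}) \<inter> (F' - {t}))))) =
                 convex hull (c ` (insert t ((F - {t}) \<inter> (F' - {t}))))"
        by (metis hull_insert image_insert)
      also have "insert t ((F - {t}) \<inter> (F' - {t})) = F \<inter> F'" using t(1) t'(1) True by auto
      finally show ?thesis .
    next
      case False
      then consider "t' \<inter> rel_interior t = {}" | "t \<inter> rel_interior t' = {}"
        using top_unique_or_disj[OF tK(1) tK'(1)] by blast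
      then show ?thesis
      proof cases
        case 1
        have tnot: "t \<notin> F'"
        proof
          assume "t \<in> F'"
          then have "rel_interior t \<subseteq> t'" using t'(2) rel_interior_subset by blast
          then show False using 1 rel_int_ne[OF tK] by blast
        qed
        have dis: "disjnt (convex hull (c ` F')) (rel_interior t)"
          using XF' 1 by (auto simp: disjnt_def)
        have "convex hull (c ` F') \<inter> convex hull (c ` F) =
              convex hull (c ` F') \<inter> convex hull (insert (c t) (convex hull (c ` (F - {t}))))"
          using hull_split[OF t(1)] by simp
        also have "\<dots> = convex hull (c ` F') \<inter> convex hull (convex hull (c ` (F - {t})))"
          by (rule Int_convex_hull_insert_rel_exterior[OF convexK[OF tK(1)] XGt ct dis])
        also have "\<dots> = convex hull (c ` (F - {t})) \<inter> convex hull (c ` F')"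
          by (simp add: Int_commute)
        also have "\<dots> = convex hull (c ` ((F - {t}) \<inter> F'))"
          using less.hyps[OF _ chG less.prems(2)] cG by simp
        also have "(F - {t}) \<inter> F' = F \<inter> F'" using tnot by auto
        finally show ?thesis by (simp add: Int_commute)
      next
        case 2
        have tnot: "t' \<notin> F"
        proof
          assume "t' \<in> F"
          then have "rel_interior t' \<subseteq> t" using t(2) rel_interior_subset by blast
          then show False using 2 rel_int_ne[OF tK'] by blast
        qed
        have dis: "disjnt (convex hull (c ` F)) (rel_interior t')"
          using XF 2 by (auto simp: disjnt_def)
        have "convex hull (c ` F) \<inter> convex hull (c ` F') =
              convex hull (c ` F) \<inter> convex hull (insert (c t') (convex hull (c ` (F' - {t'}))))"
          using hull_split[OF t'(1)] by simp
        also have "\<dots> = convex hull (c ` F) \<inter> convex hull (convex hull (c ` (F' - {t'})))"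
          by (rule Int_convex_hull_insert_rel_exterior[OF convexK[OF tK'(1)] XGt' ct' dis])
        also have "\<dots> = convex hull (c ` F) \<inter> convex hull (c ` (F' - {t'}))"
          by simp
        also have "\<dots> = convex hull (c ` (F \<inter> (F' - {t'})))"
          using less.hyps[OF _ less.prems(1) chG'] cG' by simp
        also have "F \<inter> (F' - {t'}) = F \<inter> F'" using tnot by auto
        finally show ?thesis .
      qed
    qed
  qed
qed

lemma Sd_simplicial: "simplicial_complex (Sd c K)"
  unfolding simplicial_complex_def
proof (intro conjI allI impI ballI)
  have "Sd c K \<subseteq> (\<lambda>F. convex hull (c ` F)) ` Pow K"
    unfolding Sd_eq chainK_def by blast
  then show "finite (Sd c K)" using finK finite_subset by blast
next
  fix S assume "S \<in> Sd c K"
  then obtain F where F: "chainK F" "S = convex hull (c ` F)" unfolding Sd_eq by blast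
  then have "\<not> affine_dependent (c ` F)" by (simp add: chain_indep)
  then have "(int (card (c ` F)) - 1) simplex S" using F(2) by (auto intro: simplex_convex_hull)
  then show "\<exists>n. n simplex S" by blast
next
  fix Y S assume a: "S \<in> Sd c K \<and> Y face_of S"
  then obtain F where F: "chainK F" "S = convex hull (c ` F)" unfolding Sd_eq by blast
  then have ind: "\<not> affine_dependent (c ` F)" by (simp add: chain_indep)
  then obtain C' where C': "C' \<subseteq> c ` F" "Y = convex hull C'"
    using face_of_convex_hull_affine_independent[OF ind] a F(2) by blast
  define H where "H = {s \<in> F. c s \<in> C'}"
  have "c ` H = C'" using C'(1) unfolding H_def by auto
  moreover have "chainK H" by (rule chainK_sub[OF F(1)]) (auto simp: H_def)
  ultimately show "Y \<in> Sd c K" unfolding Sd_eq using C'(2) by blast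
next
  fix S S' assume a: "S \<in> Sd c K \<and> S' \<in> Sd c K"
  then obtain F F' where F: "chainK F" "S = convex hull (c ` F)" "chainK F'" "S' = convex hull (c ` F')"
    unfolding Sd_eq by blast
  then have ind: "\<not> affine_dependent (c ` F)" by (simp add: chain_indep)
  have eq: "S \<inter> S' = convex hull (c ` (F \<inter> F'))" unfolding F(2,4) by (rule Int_chain[OF F(1) F(3)])
  have sub: "c ` (F \<inter> F') \<subseteq> c ` F" by auto
  have "convex hull (c ` (F \<inter> F')) face_of convex hull (c ` F)"
    unfolding face_of_convex_hull_affine_independent[OF ind] using sub by blast
  then show "S \<inter> S' face_of S" using eq F(2) by simp
qed

lemma cover:
  assumes "s \<in> K" "s \<noteq> {}" "p \<in> s"
  shows "\<exists>F. chainK F \<and> (\<forall>f\<in>F. f \<subseteq> s) \<and> p \<in> convex hull (c ` F)"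
  using assms
proof (induction "nat (aff_dim s)" arbitrary: s p rule: less_induct)
  case less
  show ?case
  proof (cases "p = c s")
    case True
    have "chainK {s}" using less.prems by (auto simp: chainK_def is_chain_def)
    then show ?thesis using True by (intro exI[of _ "{s}"]) auto
  next
    case False
    have cs: "c s \<in> rel_interior s" using cin less.prems by blast
    obtain y where y: "y \<in> rel_frontier s" "p \<in> closed_segment (c s) y"
      using segment_to_rel_frontier_aux[OF convexK[OF less.prems(1)]
              compact_imp_bounded[OF compactK[OF less.prems(1)]] cs less.prems(3)] False by metis
    have "polyhedron s" using polytopeK[OF less.prems(1)] polytope_imp_polyhedron by blast
    then obtain f where f: "f facet_of s" "y \<in> f"
      using rel_frontier_of_polyhedron y(1) by blast
    have ff: "f face_of s" "f \<noteq> {}" "aff_dim f = aff_dim s - 1"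
      using f(1) by (auto simp: facet_of_def)
    have fK: "f \<in> K" using faceK[OF less.prems(1) ff(1)] .
    have "aff_dim f \<ge> 0" using ff(2) by (metis aff_dim_negative_iff not_le)
    then have "nat (aff_dim f) < nat (aff_dim s)" using ff(3) by linarith
    then obtain H where H: "chainK H" "\<forall>g\<in>H. g \<subseteq> f" "y \<in> convex hull (c ` H)"
      using less.hyps[OF _ fK ff(2) f(2)] by blast
    have fs: "f \<subseteq> s" using ff(1) face_of_imp_subset by blast
    have ch: "chainK (insert s H)"
      using H(1,2) less.prems fs unfolding chainK_def is_chain_def by blast
    have "c s \<in> convex hull (c ` (insert s H))" by (simp add: hull_inc)
    moreover have "y \<in> convex hull (c ` (insert s H))"
      using H(3) hull_mono[of "c ` H" "c ` (insert s H)"] by blast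
    ultimately have "closed_segment (c s) y \<subseteq> convex hull (c ` (insert s H))"
      by (simp add: closed_segment_subset)
    then show ?thesis using ch H(2) fs y(2) by (intro exI[of _ "insert s H"]) auto
  qed
qed

lemma Sd_union: "\<Union>(Sd c K) = \<Union>K"
proof
  show "\<Union>(Sd c K) \<subseteq> \<Union>K"
  proof
    fix x assume "x \<in> \<Union>(Sd c K)"
    then obtain F where F: "chainK F" "x \<in> convex hull (c ` F)" unfolding Sd_eq by blast
    then have Fne: "F \<noteq> {}" by auto
    from chainK_top_ex[OF F(1) Fne] obtain t where t_1: "t \<in> F" and t_2: "\<forall>s\<in>F. s \<subseteq> t" ..
    have t: "t \<in> F" "\<And>s. s \<in> F \<Longrightarrow> s \<subseteq> t" using t_1 t_2 by auto
    then have "x \<in> t" using hull_sub_top[OF F(1) t] F(2) by blast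
    then show "x \<in> \<Union>K" using chainK_mem[OF F(1) t(1)] by blast
  qed
next
  show "\<Union>K \<subseteq> \<Union>(Sd c K)"
  proof
    fix x assume "x \<in> \<Union>K"
    then obtain s where "s \<in> K" "x \<in> s" by blast
    then obtain F where "chainK F" "x \<in> convex hull (c ` F)" using cover by blast
    then show "x \<in> \<Union>(Sd c K)" unfolding Sd_eq by blast
  qed
qed

lemma derived_Sd: "derived_subdivision K (Sd c K)"
  unfolding derived_subdivision_def straight_triangulation_def
  using Sd_simplicial Sd_union cin unfolding Sd_def by blast

end


lemma split_rel_interior:
  fixes a :: "'a::euclidean_space"
  assumes ind: "\<not> affine_dependent (insert a B)" and aB: "a \<notin> B" and Bne: "B \<noteq> {}"
    and p: "p \<in> rel_interior (convex hull (insert a B))"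
  shows "\<exists>u y. 0 < u \<and> u < 1 \<and> y \<in> rel_interior (convex hull B) \<and> p = u *\<^sub>R a + (1 - u) *\<^sub>R y"
proof -
  have finB: "finite B" using aff_independent_finite[OF ind] by simp
  obtain w where w: "\<forall>x\<in>insert a B. 0 < w x" "sum w (insert a B) = 1"
    "(\<Sum>x\<in>insert a B. w x *\<^sub>R x) = p"
    using p rel_interior_convex_hull_explicit[OF ind] by blast
  define u where "u = w a"
  have s1: "u + sum w B = 1" using w(2) finB aB by (simp add: u_def)
  have sB: "sum w B > 0" using w(1) finB Bne by (intro sum_pos) auto
  have u0: "0 < u" using w(1) by (simp add: u_def)
  have u1: "u < 1" using s1 sB by linarith
  define y where "y = (\<Sum>x\<in>B. (w x / (1 - u)) *\<^sub>R x)"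
  have indB: "\<not> affine_dependent B" using ind affine_dependent_subset[of B "insert a B"] by blast
  have "y \<in> rel_interior (convex hull B)"
    unfolding rel_interior_convex_hull_explicit[OF indB]
  proof (intro CollectI exI[of _ "\<lambda>x. w x / (1 - u)"] conjI ballI)
    fix x assume "x \<in> B" then show "0 < w x / (1 - u)" using w(1) u1 by simp
  next
    show "(\<Sum>x\<in>B. w x / (1 - u)) = 1" using s1 u1 by (simp add: sum_divide_distrib[symmetric])
  next
    show "(\<Sum>x\<in>B. (w x / (1 - u)) *\<^sub>R x) = y" by (simp add: y_def)
  qed
  moreover have "p = u *\<^sub>R a + (1 - u) *\<^sub>R y"
  proof -
    have "(1 - u) *\<^sub>R y = (\<Sum>x\<in>B. w x *\<^sub>R x)"
      using u1 by (simp add: y_def scaleR_sum_right)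
    then show ?thesis using w(3) finB aB by (simp add: u_def)
  qed
  ultimately show ?thesis using u0 u1 by blast
qed

definition pcone :: "'a::euclidean_space \<Rightarrow> 'a set \<Rightarrow> 'a set" where
  "pcone z f = {p. \<exists>u y. 0 < u \<and> u < 1 \<and> y \<in> rel_interior f \<and> p = u *\<^sub>R z + (1 - u) *\<^sub>R y}"

context dsub
begin

lemma top_rel_interior:
  assumes F: "chainK F" and t: "t \<in> F" "\<And>s. s \<in> F \<Longrightarrow> s \<subseteq> t"
  shows "rel_interior (convex hull (c ` F)) \<subseteq> rel_interior t"
proof (cases "F - {t} = {}")
  case True
  then have "F = {t}" using t(1) by blast
  then show ?thesis using cin chainK_mem[OF F t(1)] by simp
next
  case False
  have tK: "t \<in> K" "t \<noteq> {}" using chainK_mem[OF F t(1)] by auto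
  have ind: "\<not> affine_dependent (c ` F)" using chain_indep[OF F] .
  have eqF: "c ` F = insert (c t) (c ` (F - {t}))" using t(1) by auto
  have na: "c t \<notin> c ` (F - {t})"
    using hull_rest_affine[OF F t] hull_subset[of "c ` (F - {t})" affine] by blast
  have ne: "c ` (F - {t}) \<noteq> {}" using False by blast
  show ?thesis
  proof
    fix p assume "p \<in> rel_interior (convex hull (c ` F))"
    then obtain u y where uy: "0 < u" "u < 1" "y \<in> rel_interior (convex hull (c ` (F - {t})))"
        "p = u *\<^sub>R c t + (1 - u) *\<^sub>R y"
      using split_rel_interior[of "c t" "c ` (F - {t})" p] ind eqF na ne by auto
    have "y \<in> convex hull (c ` (F - {t}))" using uy(3) rel_interior_subset by blast
    also have "\<dots> \<subseteq> rel_frontier t" using hull_rest_frontier[OF F t] .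
    also have "\<dots> \<subseteq> closure t" by (simp add: rel_frontier_def)
    finally have yc: "y \<in> closure t" .
    have "y - u *\<^sub>R (y - c t) \<in> rel_interior t"
      by (rule rel_interior_closure_convex_shrink[OF convexK[OF tK(1)] cin[OF tK] yc uy(1)]) (use uy(2) in simp)
    moreover have "y - u *\<^sub>R (y - c t) = p" using uy(4) by (simp add: algebra_simps)
    ultimately show "p \<in> rel_interior t" by simp
  qed
qed

lemma cone_lemma:
  assumes F: "chainK F" and t: "t \<in> F" "\<And>s. s \<in> F \<Longrightarrow> s \<subseteq> t"
    and g: "g \<in> F - {t}" "\<And>s. s \<in> F - {t} \<Longrightarrow> s \<subseteq> g"
  shows "rel_interior (convex hull (c ` F)) \<subseteq> pcone (c t) g"
proof
  have G: "chainK (F - {t})" using chainK_sub[OF F] by blast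
  have ind: "\<not> affine_dependent (c ` F)" using chain_indep[OF F] .
  have eqF: "c ` F = insert (c t) (c ` (F - {t}))" using t(1) by auto
  have na: "c t \<notin> c ` (F - {t})"
    using hull_rest_affine[OF F t] hull_subset[of "c ` (F - {t})" affine] by blast
  have ne: "c ` (F - {t}) \<noteq> {}" using g(1) by blast
  fix p assume "p \<in> rel_interior (convex hull (c ` F))"
  then obtain u y where uy: "0 < u" "u < 1" "y \<in> rel_interior (convex hull (c ` (F - {t})))"
      "p = u *\<^sub>R c t + (1 - u) *\<^sub>R y"
    using split_rel_interior[of "c t" "c ` (F - {t})" p] ind eqF na ne by auto
  have "y \<in> rel_interior g" using top_rel_interior[OF G g] uy(3) by blast
  then show "p \<in> pcone (c t) g" unfolding pcone_def using uy by blast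
qed

end

lemma median_exists:
  fixes g :: "'b \<Rightarrow> real"
  assumes "finite A" "A \<noteq> {}"
  shows "\<exists>a0\<in>A. 2 * card {a\<in>A. g a < g a0} \<le> card A \<and> 2 * card {a\<in>A. g a0 < g a} \<le> card A"
proof -
  define V where "V = g ` A"
  have finV: "finite V" "V \<noteq> {}" using assms by (auto simp: V_def)
  define P where "P v \<longleftrightarrow> card A \<le> 2 * card {a\<in>A. g a \<le> v}" for v
  define W where "W = {v\<in>V. P v}"
  have MW: "Max V \<in> W"
  proof -
    have "{a\<in>A. g a \<le> Max V} = A" using finV by (auto simp: V_def)
    then show ?thesis using finV by (simp add: W_def P_def)
  qed
  have finW1: "finite W" unfolding W_def using finV(1) by simp
  have finW2: "W \<noteq> {}" using MW by blast
  note finW = finW1 finW2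
  define \<theta> where "\<theta> = Min W"
  have thW: "\<theta> \<in> W" using finW by (simp add: \<theta>_def)
  then obtain a0 where a0: "a0 \<in> A" "g a0 = \<theta>" by (auto simp: W_def V_def)
  have Pth: "P \<theta>" using thW by (simp add: W_def)
  have c1: "2 * card {a\<in>A. \<theta> < g a} \<le> card A"
  proof -
    have "{a\<in>A. \<theta> < g a} = A - {a\<in>A. g a \<le> \<theta>}" by auto
    then have "card {a\<in>A. \<theta> < g a} = card A - card {a\<in>A. g a \<le> \<theta>}"
      using assms(1) by (simp add: card_Diff_subset)
    moreover have "card {a\<in>A. g a \<le> \<theta>} \<le> card A" using assms(1) by (intro card_mono) auto
    ultimately show ?thesis using Pth unfolding P_def by linarith
  qed
  have c2: "2 * card {a\<in>A. g a < \<theta>} \<le> card A"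
  proof (cases "{v\<in>V. v < \<theta>} = {}")
    case True
    then have e: "{a\<in>A. g a < \<theta>} = {}" by (auto simp: V_def)
    show ?thesis unfolding e by simp
  next
    case False
    define v' where "v' = Max {v\<in>V. v < \<theta>}"
    have fin': "finite {v\<in>V. v < \<theta>}" using finV by simp
    have v'in: "v' \<in> {v\<in>V. v < \<theta>}" using Max_in[OF fin' False] by (simp add: v'_def)
    have "{a\<in>A. g a < \<theta>} = {a\<in>A. g a \<le> v'}"
    proof safe
      fix a assume "a \<in> A" "g a < \<theta>"
      then show "g a \<le> v'" unfolding v'_def using fin' by (intro Max_ge) (auto simp: V_def)
    next
      fix a assume "a \<in> A" "g a \<le> v'"
      then show "g a < \<theta>" using v'in by simp
    qed
    moreover have "\<not> P v'"
    proof
      assume "P v'"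
      then have "v' \<in> W" using v'in by (simp add: W_def)
      then have "\<theta> \<le> v'" unfolding \<theta>_def using finW by simp
      then show False using v'in by simp
    qed
    ultimately show ?thesis unfolding P_def by simp
  qed
  show ?thesis using a0 c1 c2 by auto
qed

lemma carrier:
  fixes S :: "'a::euclidean_space set set"
  assumes sc: "simplicial_complex S" and "\<sigma> \<in> S" "q \<in> \<sigma>"
  shows "\<exists>f\<in>S. q \<in> rel_interior f"
  using assms(2,3)
proof (induction "nat (aff_dim \<sigma>)" arbitrary: \<sigma> rule: less_induct)
  case less
  show ?case
  proof (cases "q \<in> rel_interior \<sigma>")
    case True then show ?thesis using less.prems by blast
  next
    case False
    have simp: "\<exists>n. n simplex \<sigma>" using sc less.prems by (simp add: simplicial_complex_def)
    then have poly: "polytope \<sigma>" and cl: "closed \<sigma>"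
      using simplex_imp_polytope closed_simplex by blast+
    have "q \<in> rel_frontier \<sigma>" using False less.prems cl by (simp add: rel_frontier_def)
    moreover have "polyhedron \<sigma>" using poly polytope_imp_polyhedron by blast
    ultimately obtain f where f: "f facet_of \<sigma>" "q \<in> f"
      using rel_frontier_of_polyhedron by blast
    have ff: "f face_of \<sigma>" "f \<noteq> {}" "aff_dim f = aff_dim \<sigma> - 1"
      using f(1) by (auto simp: facet_of_def)
    have fS: "f \<in> S" using sc less.prems ff(1) by (auto simp: simplicial_complex_def)
    have "aff_dim f \<ge> 0" using ff(2) by (metis aff_dim_negative_iff not_le)
    then have "nat (aff_dim f) < nat (aff_dim \<sigma>)" using ff(3) by linarith
    then show ?thesis using less.hyps[OF _ fS f(2)] by blast
  qed
qed



lemma RL1: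
  fixes u t \<rho> :: real
  assumes "0<u" "u<1" "0<t" "t<1" "0<\<rho>" "\<rho><1"
  shows "min ((u*t*(1-\<rho>)) / ((u*t*(1-\<rho>)) + (1 - (u*t*(1-\<rho>)) - (u*t*\<rho>)) * (1-\<rho>)))
             ((u*t*\<rho>) / ((u*t*\<rho>) + (1 - (u*t*(1-\<rho>)) - (u*t*\<rho>)) * \<rho>)) < t"
proof -
  have "(u*t*(1-\<rho>)) + (1 - (u*t*(1-\<rho>)) - (u*t*\<rho>)) * (1-\<rho>) = 1 - \<rho>" by (simp add: algebra_simps)
  then have "(u*t*(1-\<rho>)) / ((u*t*(1-\<rho>)) + (1 - (u*t*(1-\<rho>)) - (u*t*\<rho>)) * (1-\<rho>)) = u * t"
    using assms by simp
  moreover have "u * t < t" using assms by simp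
  ultimately show ?thesis by linarith
qed

lemma RL2:
  fixes u t \<rho> w :: real
  assumes "0<u" "u<1" "0<t" "t<1" "0<\<rho>" "\<rho><1" "0<w"
  shows "(u*t*\<rho>) / ((u*t*(1-\<rho>) + (1-u)*w) + u*t*\<rho>) < \<rho>"
proof -
  have pos: "(u*t*(1-\<rho>) + (1-u)*w) + u*t*\<rho> > 0" using assms
    by (metis add_pos_pos diff_gt_0_iff_gt mult_pos_pos add_pos_nonneg less_eq_real_def)
  have "u*t*\<rho> < \<rho> * ((u*t*(1-\<rho>) + (1-u)*w) + u*t*\<rho>)"
  proof -
    have "\<rho> * ((u*t*(1-\<rho>) + (1-u)*w) + u*t*\<rho>) = u*t*\<rho> + \<rho>*(1-u)*w" by (simp add: algebra_simps)
    moreover have "\<rho>*(1-u)*w > 0" using assms by simp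
    ultimately show ?thesis by linarith
  qed
  then show ?thesis using pos by (simp add: divide_less_eq)
qed

lemma RL3:
  fixes u t \<rho> w :: real
  assumes "0<u" "u<1" "0<t" "t<1" "0<\<rho>" "\<rho><1" "0<w"
  shows "\<rho> < (u*t*\<rho> + (1-u)*w) / (u*t*(1-\<rho>) + (u*t*\<rho> + (1-u)*w))"
proof -
  have pos: "u*t*(1-\<rho>) + (u*t*\<rho> + (1-u)*w) > 0" using assms
    by (metis add_pos_pos diff_gt_0_iff_gt mult_pos_pos)
  have "\<rho> * (u*t*(1-\<rho>) + (u*t*\<rho> + (1-u)*w)) < u*t*\<rho> + (1-u)*w"
  proof -
    have "\<rho> * (u*t*(1-\<rho>) + (u*t*\<rho> + (1-u)*w)) = u*t*\<rho> + \<rho>*(1-u)*w" by (simp add: algebra_simps)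
    moreover have "\<rho>*(1-u)*w < (1-u)*w" using assms by simp
    ultimately show ?thesis by linarith
  qed
  then show ?thesis using pos by (simp add: less_divide_eq)
qed

lemma RL4a:
  fixes u t k x :: real
  assumes "0<u" "u<1" "0<t" "t<1" "0<k" "t*u*k < x"
  shows "t < x / (x + u*(1-t)*k)"
proof -
  have x0: "x > 0" using assms by (smt (verit) mult_pos_pos)
  have pos: "x + u*(1-t)*k > 0" using assms x0 by (simp add: add_pos_pos)
  have "t * (x + u*(1-t)*k) < x"
  proof -
    have "t * (x + u*(1-t)*k) = x - (1-t) * (x - t*u*k)" by (simp add: algebra_simps)
    moreover have "(1-t) * (x - t*u*k) > 0" using assms by simp
    ultimately show ?thesis by linarith
  qed
  then show ?thesis using pos by (simp add: less_divide_eq)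
qed

lemma RL4:
  fixes u t \<rho> w :: real
  assumes "0<u" "u<1" "0<t" "t<1" "0<\<rho>" "\<rho><1" "0<w" "w<1"
  defines "x \<equiv> u*t*(1-\<rho>) + (1-u)*(1-w)" and "y \<equiv> u*t*\<rho> + (1-u)*w"
  shows "t < min (x / (x + (1 - x - y) * (1-\<rho>))) (y / (y + (1 - x - y) * \<rho>))"
proof -
  have e: "1 - x - y = u*(1-t)" unfolding x_def y_def by (simp add: algebra_simps)
  have "x - t*u*(1-\<rho>) = (1-u)*(1-w)" unfolding x_def by (simp add: algebra_simps)
  moreover have "(1-u)*(1-w) > 0" using assms by simp
  ultimately have "t*u*(1-\<rho>) < x" by linarith
  then have 1: "t < x / (x + u*(1-t)*(1-\<rho>))" using RL4a[of u t "1-\<rho>" x] assms by simp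
  have "y - t*u*\<rho> = (1-u)*w" unfolding y_def by (simp add: algebra_simps)
  moreover have "(1-u)*w > 0" using assms by simp
  ultimately have "t*u*\<rho> < y" by linarith
  then have 2: "t < y / (y + u*(1-t)*\<rho>)" using RL4a[of u t \<rho> y] assms by simp
  show ?thesis using 1 2 e by (simp add: mult.assoc)
qed



lemma coords_unique:
  fixes v1 v2 v3 :: "'a::euclidean_space"
  assumes ind: "\<not> affine_dependent {v1,v2,v3}" and d: "v1\<noteq>v2" "v1\<noteq>v3" "v2\<noteq>v3"
    and eq: "a *\<^sub>R (v2 - v1) + b *\<^sub>R (v3 - v1) = a' *\<^sub>R (v2 - v1) + b' *\<^sub>R (v3 - v1)"
  shows "a = a' \<and> b = b'"
proof (rule ccontr)
  assume nz: "\<not> (a = a' \<and> b = b')"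
  define x where "x = a - a'"
  define y where "y = b - b'"
  have e0: "x *\<^sub>R (v2 - v1) + y *\<^sub>R (v3 - v1) = 0"
    using eq unfolding x_def y_def by (simp add: algebra_simps)
  define U where "U = (\<lambda>v. if v = v1 then -(x+y) else if v = v2 then x else y)"
  have "sum U {v1,v2,v3} = 0" using d by (simp add: U_def)
  moreover have "(\<Sum>v\<in>{v1,v2,v3}. U v *\<^sub>R v) = 0"
  proof -
    have "(\<Sum>v\<in>{v1,v2,v3}. U v *\<^sub>R v) = (-(x+y)) *\<^sub>R v1 + x *\<^sub>R v2 + y *\<^sub>R v3"
      using d by (simp add: U_def)
    also have "\<dots> = x *\<^sub>R (v2 - v1) + y *\<^sub>R (v3 - v1)" by (simp add: algebra_simps)
    finally show ?thesis using e0 by simp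
  qed
  moreover have "\<exists>v\<in>{v1,v2,v3}. U v \<noteq> 0" using nz d unfolding U_def x_def y_def by auto
  ultimately have "affine_dependent {v1,v2,v3}"
    using affine_dependent_explicit_finite[of "{v1,v2,v3}"] by auto
  then show False using ind by simp
qed

lemma seg_ri:
  fixes vi vj :: "'a::euclidean_space"
  assumes "vi \<noteq> vj" "y \<in> rel_interior (convex hull {vi, vj})"
  shows "\<exists>w. 0 < w \<and> w < 1 \<and> y = (1 - w) *\<^sub>R vi + w *\<^sub>R vj"
  using assms by (simp add: segment_convex_hull[symmetric] rel_interior_closed_segment in_segment)

lemma sing_ri:
  fixes v :: "'a::euclidean_space"
  shows "y \<in> rel_interior (convex hull {v}) \<longleftrightarrow> y = v"
  by simp

lemma card_bound:
  assumes "A \<inter> P \<subseteq> S" "finite S" "2 * card S \<le> (n::nat)"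
  shows "2 * card (A \<inter> P) \<le> n"
proof -
  have "card (A \<inter> P) \<le> card S" by (rule card_mono[OF assms(2) assms(1)])
  then show ?thesis using assms(3) by linarith
qed

lemma subsets3:
  assumes "C \<subseteq> {v1,v2,v3}" "C \<noteq> {}" "C \<noteq> {v1,v2,v3}"
  shows "C = {v1} \<or> C = {v2} \<or> C = {v3} \<or> C = {v1,v2} \<or> C = {v1,v3} \<or> C = {v2,v3}"
proof -
  have "C = (if v1 \<in> C then {v1} else {}) \<union> (if v2 \<in> C then {v2} else {}) \<union> (if v3 \<in> C then {v3} else {})"
    using assms(1) by auto
  then show ?thesis using assms(2,3) by (auto split: if_splits)
qed



lemma local_tri:
  fixes v1 v2 v3 :: "'a::euclidean_space"
  assumes ind: "\<not> affine_dependent {v1,v2,v3}" and d: "v1\<noteq>v2" "v1\<noteq>v3" "v2\<noteq>v3"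
    and A: "finite A" "A \<subseteq> rel_interior (convex hull {v1,v2,v3})" "A \<noteq> {}"
  shows "\<exists>z \<in> rel_interior (convex hull {v1,v2,v3}). \<forall>C. C \<subseteq> {v1,v2,v3} \<longrightarrow> C \<noteq> {} \<longrightarrow>
            C \<noteq> {v1,v2,v3} \<longrightarrow> 2 * card (A \<inter> pcone z (convex hull C)) \<le> card A"
proof -
  define d1 where "d1 = v2 - v1"
  define d2 where "d2 = v3 - v1"
  define co where "co p = (SOME ab. p = v1 + fst ab *\<^sub>R d1 + snd ab *\<^sub>R d2)" for p
  have co: "co (v1 + a *\<^sub>R d1 + b *\<^sub>R d2) = (a, b)" for a b
  proof -
    let ?P = "\<lambda>ab. v1 + a *\<^sub>R d1 + b *\<^sub>R d2 = v1 + fst ab *\<^sub>R d1 + snd ab *\<^sub>R d2"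
    have "?P (SOME ab. ?P ab)" by (rule someI[of ?P "(a,b)"]) simp
    then have "a *\<^sub>R (v2 - v1) + b *\<^sub>R (v3 - v1) =
       fst (SOME ab. ?P ab) *\<^sub>R (v2 - v1) + snd (SOME ab. ?P ab) *\<^sub>R (v3 - v1)"
      unfolding d1_def d2_def by (simp add: add.assoc)
    then have "a = fst (SOME ab. ?P ab) \<and> b = snd (SOME ab. ?P ab)"
      by (rule coords_unique[OF ind d])
    then show ?thesis unfolding co_def by (simp add: prod_eq_iff)
  qed
  define X where "X p = fst (co p)" for p
  define Y where "Y p = snd (co p)" for p
  have XYc: "X (v1 + a *\<^sub>R d1 + b *\<^sub>R d2) = a" "Y (v1 + a *\<^sub>R d1 + b *\<^sub>R d2) = b" for a b
    using co[of a b] by (simp_all add: X_def Y_def)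
  have inA: "\<exists>x y. 0 < x \<and> 0 < y \<and> x + y < 1 \<and> a = v1 + x *\<^sub>R d1 + y *\<^sub>R d2" if "a \<in> A" for a
  proof -
    have "a \<in> rel_interior (convex hull {v1,v2,v3})" using A that by blast
    then obtain w where w: "\<forall>v\<in>{v1,v2,v3}. 0 < w v" "sum w {v1,v2,v3} = 1"
        "(\<Sum>v\<in>{v1,v2,v3}. w v *\<^sub>R v) = a"
      unfolding rel_interior_convex_hull_explicit[OF ind] by blast
    have s: "w v1 + w v2 + w v3 = 1" using w(2) d by (simp add: add.assoc)
    have "a = w v1 *\<^sub>R v1 + w v2 *\<^sub>R v2 + w v3 *\<^sub>R v3" using w(3) d by (simp add: add.assoc)
    also have "\<dots> = v1 + w v2 *\<^sub>R d1 + w v3 *\<^sub>R d2"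
    proof -
      have id: "w v1 *\<^sub>R v1 + w v2 *\<^sub>R v2 + w v3 *\<^sub>R v3 = (w v1 + w v2 + w v3) *\<^sub>R v1 + w v2 *\<^sub>R d1 + w v3 *\<^sub>R d2"
        unfolding d1_def d2_def by (simp add: algebra_simps)
      show ?thesis by (metis id s scaleR_one)
    qed
    finally show ?thesis using w(1) s by (intro exI[of _ "w v2"] exI[of _ "w v3"]) auto
  qed
  have XY: "0 < X a \<and> 0 < Y a \<and> X a + Y a < 1" if aA: "a \<in> A" for a
  proof -
    obtain x y where "0 < x" "0 < y" "x + y < 1" "a = v1 + x *\<^sub>R d1 + y *\<^sub>R d2"
      using inA[OF aA] by blast
    then show ?thesis using XYc by simp
  qed
  define r where "r p = Y p / (X p + Y p)" for p
  obtain a0 where a0: "a0 \<in> A" "2 * card {a\<in>A. r a < r a0} \<le> card A"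
      "2 * card {a\<in>A. r a0 < r a} \<le> card A"
    using median_exists[OF A(1) A(3), of r] by blast
  define \<rho> where "\<rho> = r a0"
  have \<rho>: "0 < \<rho>" "\<rho> < 1"
  proof -
    have "0 < X a0" "0 < Y a0" using XY[OF a0(1)] by auto
    then show "0 < \<rho>" "\<rho> < 1" unfolding \<rho>_def r_def by (simp_all add: divide_less_eq)
  qed
  define \<tau> where "\<tau> p = min (X p / (X p + (1 - X p - Y p) * (1-\<rho>))) (Y p / (Y p + (1 - X p - Y p) * \<rho>))" for p
  obtain a1 where a1: "a1 \<in> A" "2 * card {a\<in>A. \<tau> a < \<tau> a1} \<le> card A"
      "2 * card {a\<in>A. \<tau> a1 < \<tau> a} \<le> card A"
    using median_exists[OF A(1) A(3), of \<tau>] by blast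
  define t where "t = \<tau> a1"
  have t: "0 < t" "t < 1"
  proof -
    have h: "0 < X a1" "0 < Y a1" "X a1 + Y a1 < 1" using XY[OF a1(1)] by auto
    have p1: "(1 - X a1 - Y a1) * (1-\<rho>) > 0" "(1 - X a1 - Y a1) * \<rho> > 0" using h \<rho> by simp_all
    have "0 < X a1 / (X a1 + (1 - X a1 - Y a1) * (1-\<rho>))" "X a1 / (X a1 + (1 - X a1 - Y a1) * (1-\<rho>)) < 1"
      using h p1 by (simp_all add: divide_less_eq)
    moreover have "0 < Y a1 / (Y a1 + (1 - X a1 - Y a1) * \<rho>)" "Y a1 / (Y a1 + (1 - X a1 - Y a1) * \<rho>) < 1"
      using h p1 by (simp_all add: divide_less_eq)
    ultimately show "0 < t" "t < 1" unfolding t_def \<tau>_def by auto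
  qed
  define z where "z = v1 + (t*(1-\<rho>)) *\<^sub>R d1 + (t*\<rho>) *\<^sub>R d2"
  define wz where "wz v = (if v = v1 then 1 - t else if v = v2 then t*(1-\<rho>) else t*\<rho>)" for v
  have zin: "z \<in> rel_interior (convex hull {v1,v2,v3})"
    unfolding rel_interior_convex_hull_explicit[OF ind]
  proof (intro CollectI exI[of _ wz] conjI)
    show "\<forall>x\<in>{v1,v2,v3}. 0 < wz x" using t \<rho> d by (auto simp: wz_def)
    show "sum wz {v1,v2,v3} = 1" using d by (simp add: wz_def algebra_simps)
    show "(\<Sum>x\<in>{v1,v2,v3}. wz x *\<^sub>R x) = z"
      using d unfolding z_def d1_def d2_def by (simp add: wz_def algebra_simps)
  qed
  have comb: "u *\<^sub>R z + (1-u) *\<^sub>R (v1 + a *\<^sub>R d1 + b *\<^sub>R d2) =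
      v1 + (u*t*(1-\<rho>) + (1-u)*a) *\<^sub>R d1 + (u*t*\<rho> + (1-u)*b) *\<^sub>R d2" for u a b
    unfolding z_def by (simp add: algebra_simps)
  have pc: "X p = u*t*(1-\<rho>) + (1-u)*a \<and> Y p = u*t*\<rho> + (1-u)*b"
    if "p = u *\<^sub>R z + (1-u) *\<^sub>R (v1 + a *\<^sub>R d1 + b *\<^sub>R d2)" for p u a b
    using that comb XYc by simp
  have e_v1: "v1 = v1 + 0 *\<^sub>R d1 + 0 *\<^sub>R d2" by simp
  have e_v2: "v2 = v1 + 1 *\<^sub>R d1 + 0 *\<^sub>R d2" by (simp add: d1_def)
  have e_v3: "v3 = v1 + 0 *\<^sub>R d1 + 1 *\<^sub>R d2" by (simp add: d2_def)
  have e_12: "(1 - w) *\<^sub>R v1 + w *\<^sub>R v2 = v1 + w *\<^sub>R d1 + 0 *\<^sub>R d2" for w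
    by (simp add: d1_def algebra_simps)
  have e_13: "(1 - w) *\<^sub>R v1 + w *\<^sub>R v3 = v1 + 0 *\<^sub>R d1 + w *\<^sub>R d2" for w
    by (simp add: d2_def algebra_simps)
  have e_23: "(1 - w) *\<^sub>R v2 + w *\<^sub>R v3 = v1 + (1 - w) *\<^sub>R d1 + w *\<^sub>R d2" for w
    by (simp add: d1_def d2_def algebra_simps)
  have pcone_E: "\<exists>u y. 0 < u \<and> u < 1 \<and> y \<in> rel_interior f \<and> p = u *\<^sub>R z + (1 - u) *\<^sub>R y"
    if "p \<in> pcone z f" for p f
    using that unfolding pcone_def by blast
  have R1: "A \<inter> pcone z (convex hull {v1}) \<subseteq> {a\<in>A. \<tau> a < \<tau> a1}"
  proof
    fix p assume p: "p \<in> A \<inter> pcone z (convex hull {v1})"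
    then obtain u y where uy: "0 < u" "u < 1" "y \<in> rel_interior (convex hull {v1})" "p = u *\<^sub>R z + (1 - u) *\<^sub>R y"
      using pcone_E by blast
    have "y = v1" using uy(3) by simp
    then have "X p = u*t*(1-\<rho>) + (1-u)*0 \<and> Y p = u*t*\<rho> + (1-u)*0"
      using pc[of p u 0 0] uy(4) e_v1 by simp
    then have "\<tau> p < t" using RL1[OF uy(1,2) t \<rho>] unfolding \<tau>_def by simp
    then show "p \<in> {a\<in>A. \<tau> a < \<tau> a1}" using p t_def by simp
  qed
  have R2: "A \<inter> pcone z (convex hull {v2}) \<subseteq> {a\<in>A. r a < r a0}"
  proof
    fix p assume p: "p \<in> A \<inter> pcone z (convex hull {v2})"
    then obtain u y where uy: "0 < u" "u < 1" "y \<in> rel_interior (convex hull {v2})" "p = u *\<^sub>R z + (1 - u) *\<^sub>R y"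
      using pcone_E by blast
    have "y = v2" using uy(3) by simp
    then have "X p = u*t*(1-\<rho>) + (1-u)*1 \<and> Y p = u*t*\<rho> + (1-u)*0"
      using pc[of p u 1 0] uy(4) e_v2 by simp
    then have "r p < \<rho>" using RL2[OF uy(1,2) t \<rho>, of 1] unfolding r_def by simp
    then show "p \<in> {a\<in>A. r a < r a0}" using p \<rho>_def by simp
  qed
  have R3: "A \<inter> pcone z (convex hull {v3}) \<subseteq> {a\<in>A. r a0 < r a}"
  proof
    fix p assume p: "p \<in> A \<inter> pcone z (convex hull {v3})"
    then obtain u y where uy: "0 < u" "u < 1" "y \<in> rel_interior (convex hull {v3})" "p = u *\<^sub>R z + (1 - u) *\<^sub>R y"
      using pcone_E by blast
    have "y = v3" using uy(3) by simp
    then have "X p = u*t*(1-\<rho>) + (1-u)*0 \<and> Y p = u*t*\<rho> + (1-u)*1"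
      using pc[of p u 0 1] uy(4) e_v3 by simp
    then have "\<rho> < r p" using RL3[OF uy(1,2) t \<rho>, of 1] unfolding r_def by simp
    then show "p \<in> {a\<in>A. r a0 < r a}" using p \<rho>_def by simp
  qed
  have R12: "A \<inter> pcone z (convex hull {v1,v2}) \<subseteq> {a\<in>A. r a < r a0}"
  proof
    fix p assume p: "p \<in> A \<inter> pcone z (convex hull {v1,v2})"
    then obtain u y where uy: "0 < u" "u < 1" "y \<in> rel_interior (convex hull {v1,v2})" "p = u *\<^sub>R z + (1 - u) *\<^sub>R y"
      using pcone_E by blast
    obtain w where w: "0 < w" "w < 1" "y = (1 - w) *\<^sub>R v1 + w *\<^sub>R v2" using seg_ri[OF d(1) uy(3)] by blast
    have "X p = u*t*(1-\<rho>) + (1-u)*w \<and> Y p = u*t*\<rho> + (1-u)*0"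
      using pc[of p u w 0] uy(4) e_12 w(3) by simp
    then have "r p < \<rho>" using RL2[OF uy(1,2) t \<rho> w(1)] unfolding r_def by simp
    then show "p \<in> {a\<in>A. r a < r a0}" using p \<rho>_def by simp
  qed
  have R13: "A \<inter> pcone z (convex hull {v1,v3}) \<subseteq> {a\<in>A. r a0 < r a}"
  proof
    fix p assume p: "p \<in> A \<inter> pcone z (convex hull {v1,v3})"
    then obtain u y where uy: "0 < u" "u < 1" "y \<in> rel_interior (convex hull {v1,v3})" "p = u *\<^sub>R z + (1 - u) *\<^sub>R y"
      using pcone_E by blast
    obtain w where w: "0 < w" "w < 1" "y = (1 - w) *\<^sub>R v1 + w *\<^sub>R v3" using seg_ri[OF d(2) uy(3)] by blast
    have "X p = u*t*(1-\<rho>) + (1-u)*0 \<and> Y p = u*t*\<rho> + (1-u)*w"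
      using pc[of p u 0 w] uy(4) e_13 w(3) by simp
    then have "\<rho> < r p" using RL3[OF uy(1,2) t \<rho> w(1)] unfolding r_def by simp
    then show "p \<in> {a\<in>A. r a0 < r a}" using p \<rho>_def by simp
  qed
  have R23: "A \<inter> pcone z (convex hull {v2,v3}) \<subseteq> {a\<in>A. \<tau> a1 < \<tau> a}"
  proof
    fix p assume p: "p \<in> A \<inter> pcone z (convex hull {v2,v3})"
    then obtain u y where uy: "0 < u" "u < 1" "y \<in> rel_interior (convex hull {v2,v3})" "p = u *\<^sub>R z + (1 - u) *\<^sub>R y"
      using pcone_E by blast
    obtain w where w: "0 < w" "w < 1" "y = (1 - w) *\<^sub>R v2 + w *\<^sub>R v3" using seg_ri[OF d(3) uy(3)] by blast
    have "X p = u*t*(1-\<rho>) + (1-u)*(1-w) \<and> Y p = u*t*\<rho> + (1-u)*w"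
      using pc[of p u "1-w" w] uy(4) e_23 w(3) by simp
    then have "t < \<tau> p" using RL4[OF uy(1,2) t \<rho> w(1,2)] unfolding \<tau>_def by simp
    then show "p \<in> {a\<in>A. \<tau> a1 < \<tau> a}" using p t_def by simp
  qed
  have fins: "finite {a\<in>A. P a}" for P using A(1) by simp
  show ?thesis
  proof (intro bexI[OF _ zin] allI impI)
    fix C assume C: "C \<subseteq> {v1,v2,v3}" "C \<noteq> {}" "C \<noteq> {v1,v2,v3}"
    then consider "C = {v1}" | "C = {v2}" | "C = {v3}" | "C = {v1,v2}" | "C = {v1,v3}" | "C = {v2,v3}"
      using subsets3 by blast
    then show "2 * card (A \<inter> pcone z (convex hull C)) \<le> card A"
    proof cases
      case 1 then show ?thesis using card_bound[OF R1 fins a1(2)] by simp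
    next
      case 2 then show ?thesis using card_bound[OF R2 fins a0(2)] by simp
    next
      case 3 then show ?thesis using card_bound[OF R3 fins a0(3)] by simp
    next
      case 4 then show ?thesis using card_bound[OF R12 fins a0(2)] by simp
    next
      case 5 then show ?thesis using card_bound[OF R13 fins a0(3)] by simp
    next
      case 6 then show ?thesis using card_bound[OF R23 fins a1(3)] by simp
    qed
  qed
qed



lemma local_seg:
  fixes v1 v2 :: "'a::euclidean_space"
  assumes d: "v1 \<noteq> v2" and A: "finite A" "A \<subseteq> rel_interior (convex hull {v1,v2})" "A \<noteq> {}"
  shows "\<exists>z \<in> rel_interior (convex hull {v1,v2}). \<forall>C. C \<subseteq> {v1,v2} \<longrightarrow> C \<noteq> {} \<longrightarrow>
            C \<noteq> {v1,v2} \<longrightarrow> 2 * card (A \<inter> pcone z (convex hull C)) \<le> card A"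
proof -
  define d1 where "d1 = v2 - v1"
  have dd: "d1 \<bullet> d1 > 0" using d by (simp add: d1_def)
  define L where "L p = ((p - v1) \<bullet> d1) / (d1 \<bullet> d1)" for p
  have Lc: "L (v1 + s *\<^sub>R d1) = s" for s using dd by (simp add: L_def)
  have inA: "\<exists>s. 0 < s \<and> s < 1 \<and> a = v1 + s *\<^sub>R d1" if aA: "a \<in> A" for a
  proof -
    obtain w where "0 < w" "w < 1" "a = (1 - w) *\<^sub>R v1 + w *\<^sub>R v2"
      using seg_ri[OF d] A(2) aA by blast
    moreover have "(1 - w) *\<^sub>R v1 + w *\<^sub>R v2 = v1 + w *\<^sub>R d1" by (simp add: d1_def algebra_simps)
    ultimately show ?thesis by auto
  qed
  obtain a0 where a0: "a0 \<in> A" "2 * card {a\<in>A. L a < L a0} \<le> card A"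
      "2 * card {a\<in>A. L a0 < L a} \<le> card A"
    using median_exists[OF A(1) A(3), of L] by blast
  define \<theta> where "\<theta> = L a0"
  have \<theta>: "0 < \<theta>" "\<theta> < 1"
  proof -
    obtain s where "0 < s" "s < 1" "a0 = v1 + s *\<^sub>R d1" using inA[OF a0(1)] by blast
    then show "0 < \<theta>" "\<theta> < 1" using Lc \<theta>_def by auto
  qed
  define z where "z = v1 + \<theta> *\<^sub>R d1"
  have zin: "z \<in> rel_interior (convex hull {v1,v2})"
  proof -
    have "z = (1 - \<theta>) *\<^sub>R v1 + \<theta> *\<^sub>R v2" by (simp add: z_def d1_def algebra_simps)
    then have "z \<in> open_segment v1 v2" using \<theta> d by (auto simp: in_segment)
    then show ?thesis using d by (simp add: segment_convex_hull[symmetric] rel_interior_closed_segment)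
  qed
  have pcone_E: "\<exists>u y. 0 < u \<and> u < 1 \<and> y \<in> rel_interior f \<and> p = u *\<^sub>R z + (1 - u) *\<^sub>R y"
    if "p \<in> pcone z f" for p f
    using that unfolding pcone_def by blast
  have fins: "finite {a\<in>A. P a}" for P using A(1) by simp
  have R1: "A \<inter> pcone z (convex hull {v1}) \<subseteq> {a\<in>A. L a < L a0}"
  proof
    fix p assume p: "p \<in> A \<inter> pcone z (convex hull {v1})"
    then obtain u y where uy: "0 < u" "u < 1" "y \<in> rel_interior (convex hull {v1})" "p = u *\<^sub>R z + (1 - u) *\<^sub>R y"
      using pcone_E by blast
    have "y = v1" using uy(3) by simp
    then have "p = v1 + (u * \<theta>) *\<^sub>R d1" using uy(4) by (simp add: z_def algebra_simps)
    then have "L p = u * \<theta>" using Lc by simp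
    moreover have "u * \<theta> < \<theta>" using uy(2) \<theta> by simp
    ultimately show "p \<in> {a\<in>A. L a < L a0}" using p \<theta>_def by simp
  qed
  have R2: "A \<inter> pcone z (convex hull {v2}) \<subseteq> {a\<in>A. L a0 < L a}"
  proof
    fix p assume p: "p \<in> A \<inter> pcone z (convex hull {v2})"
    then obtain u y where uy: "0 < u" "u < 1" "y \<in> rel_interior (convex hull {v2})" "p = u *\<^sub>R z + (1 - u) *\<^sub>R y"
      using pcone_E by blast
    have "y = v2" using uy(3) by simp
    then have "p = v1 + (u * \<theta> + (1 - u)) *\<^sub>R d1" using uy(4) by (simp add: z_def d1_def algebra_simps)
    then have "L p = u * \<theta> + (1 - u)" using Lc by simp
    moreover have "\<theta> < u * \<theta> + (1 - u)"
    proof -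
      have "u * \<theta> + (1 - u) - \<theta> = (1 - u) * (1 - \<theta>)" by (simp add: algebra_simps)
      moreover have "(1 - u) * (1 - \<theta>) > 0" using uy(2) \<theta> by simp
      ultimately show ?thesis by linarith
    qed
    ultimately show "p \<in> {a\<in>A. L a0 < L a}" using p \<theta>_def by simp
  qed
  show ?thesis
  proof (intro bexI[OF _ zin] allI impI)
    fix C assume C: "C \<subseteq> {v1,v2}" "C \<noteq> {}" "C \<noteq> {v1,v2}"
    then have "C = {v1} \<or> C = {v2}" by auto
    then show "2 * card (A \<inter> pcone z (convex hull C)) \<le> card A"
      using card_bound[OF R1 fins a0(2)] card_bound[OF R2 fins a0(3)] by auto
  qed
qed

lemma local_empty:
  fixes s :: "(real^2) set"
  assumes ri_ne: "rel_interior s \<noteq> {}" and True: "A = {}"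
  shows "\<exists>z\<in>rel_interior s. \<forall>f. f face_of s \<longrightarrow> f \<noteq> s \<longrightarrow> f \<noteq> {} \<longrightarrow> 2 * card (A \<inter> pcone z f) \<le> card A"
proof -
    obtain z0 where z0: "z0 \<in> rel_interior s" using ri_ne by blast
    have h: "2 * card (A \<inter> pcone z0 f) \<le> card A" for f
      unfolding True by simp
    show ?thesis
    proof (rule bexI[OF _ z0], intro allI impI)
      fix f show "2 * card (A \<inter> pcone z0 f) \<le> card A" by (rule h)
    qed
qed

lemma local_gen:
  fixes s :: "(real^2) set"
  assumes "n simplex s" "1 \<le> aff_dim s" "finite A" "A \<subseteq> rel_interior s"
  shows "\<exists>z\<in>rel_interior s. \<forall>f. f face_of s \<longrightarrow> f \<noteq> s \<longrightarrow> f \<noteq> {} \<longrightarrow> 2 * card (A \<inter> pcone z f) \<le> card A"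
proof -
  obtain V where V: "\<not> affine_dependent V" "int (card V) = n + 1" "s = convex hull V"
    using assms(1) by (auto simp: simplex_def)
  have n: "aff_dim s = n" using aff_dim_simplex[OF assms(1)] .
  have "aff_dim s \<le> int DIM(real^2)" by (rule aff_dim_le_DIM)
  then have "aff_dim s \<le> 2" by simp
  then have cV: "card V = 2 \<or> card V = 3" using V(2) n assms(2) by linarith
  have sne: "s \<noteq> {}" using cV V(3) by auto
  have ri_ne: "rel_interior s \<noteq> {}"
    using sne V(3) by (simp add: rel_interior_eq_empty)
  show ?thesis
  proof (cases "A = {}")
    case True
    show ?thesis by (rule local_empty[OF ri_ne True])
  next
    case False
    have faces: "\<exists>C. C \<subseteq> V \<and> C \<noteq> {} \<and> C \<noteq> V \<and> f = convex hull C"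
      if "f face_of s" "f \<noteq> s" "f \<noteq> {}" for f
    proof -
      have "f face_of convex hull V" using that(1) V(3) by simp
      then obtain C where C: "C \<subseteq> V" "f = convex hull C"
        unfolding face_of_convex_hull_affine_independent[OF V(1)] by blast
      have "C \<noteq> {}" using C(2) that(3) by auto
      moreover have "C \<noteq> V" using C(2) that(2) V(3) by auto
      ultimately show ?thesis using C by blast
    qed
    from cV show ?thesis
    proof
      assume "card V = 2"
      then obtain v1 v2 where vv: "V = {v1,v2}" "v1 \<noteq> v2" by (auto simp: card_2_iff)
      obtain z where z: "z \<in> rel_interior (convex hull {v1,v2})"
        "\<forall>C. C \<subseteq> {v1,v2} \<longrightarrow> C \<noteq> {} \<longrightarrow> C \<noteq> {v1,v2} \<longrightarrow> 2 * card (A \<inter> pcone z (convex hull C)) \<le> card A"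
        using local_seg[OF vv(2) assms(3) _ False] assms(4) V(3) vv(1) by blast
      show ?thesis
      proof (intro bexI[of _ z] allI impI)
        show "z \<in> rel_interior s" using z(1) V(3) vv(1) by simp
        fix f assume "f face_of s" "f \<noteq> s" "f \<noteq> {}"
        then obtain C where "C \<subseteq> V" "C \<noteq> {}" "C \<noteq> V" "f = convex hull C" using faces by blast
        then show "2 * card (A \<inter> pcone z f) \<le> card A" using z(2) vv(1) by blast
      qed
    next
      assume "card V = 3"
      then obtain v1 v2 v3 where vv: "V = {v1,v2,v3}" "v1 \<noteq> v2" "v2 \<noteq> v3" "v1 \<noteq> v3"
        by (auto simp: card_3_iff)
      have ind: "\<not> affine_dependent {v1,v2,v3}" using V(1) vv(1) by simp
      obtain z where z: "z \<in> rel_interior (convex hull {v1,v2,v3})"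
        "\<forall>C. C \<subseteq> {v1,v2,v3} \<longrightarrow> C \<noteq> {} \<longrightarrow> C \<noteq> {v1,v2,v3} \<longrightarrow> 2 * card (A \<inter> pcone z (convex hull C)) \<le> card A"
        using local_tri[OF ind vv(2) vv(4) vv(3) assms(3) _ False] assms(4) V(3) vv(1) by blast
      show ?thesis
      proof (intro bexI[of _ z] allI impI)
        show "z \<in> rel_interior s" using z(1) V(3) vv(1) by simp
        fix f assume "f face_of s" "f \<noteq> s" "f \<noteq> {}"
        then obtain C where "C \<subseteq> V" "C \<noteq> {}" "C \<noteq> V" "f = convex hull C" using faces by blast
        then show "2 * card (A \<inter> pcone z f) \<le> card A" using z(2) vv(1) by blast
      qed
    qed
  qed
qed



lemma step:
  fixes K :: "(real^2) set set"
  assumes sc: "simplicial_complex K" and Q: "finite Q"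
    and cnt: "\<forall>s\<in>K. 1 \<le> aff_dim s \<longrightarrow> card (Q \<inter> rel_interior s) \<le> N"
  shows "\<exists>c. (\<forall>s\<in>K. s \<noteq> {} \<longrightarrow> c s \<in> rel_interior s) \<and>
             (\<forall>\<sigma>\<in>Sd c K. 1 \<le> aff_dim \<sigma> \<longrightarrow> card (Q \<inter> rel_interior \<sigma>) \<le> N div 2)"
proof -
  define Pz where "Pz s z \<longleftrightarrow> z \<in> rel_interior s \<and> (1 \<le> aff_dim s \<longrightarrow> (\<forall>f. f face_of s \<longrightarrow> f \<noteq> s \<longrightarrow> f \<noteq> {} \<longrightarrow>
      2 * card ((Q \<inter> rel_interior s) \<inter> pcone z f) \<le> card (Q \<inter> rel_interior s)))" for s z
  have ex: "\<exists>z. Pz s z" if sK: "s \<in> K" and sne: "s \<noteq> {}" for s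
  proof (cases "1 \<le> aff_dim s")
    case True
    obtain n where n: "n simplex s" using sc sK by (auto simp: simplicial_complex_def)
    have fA: "finite (Q \<inter> rel_interior s)" using Q by simp
    have sA: "Q \<inter> rel_interior s \<subseteq> rel_interior s" by simp
    obtain z where "z \<in> rel_interior s" "\<forall>f. f face_of s \<longrightarrow> f \<noteq> s \<longrightarrow> f \<noteq> {} \<longrightarrow>
        2 * card ((Q \<inter> rel_interior s) \<inter> pcone z f) \<le> card (Q \<inter> rel_interior s)"
      using local_gen[OF n True fA sA] by blast
    then show ?thesis unfolding Pz_def by blast
  next
    case False
    obtain n where "n simplex s" using sc sK by (auto simp: simplicial_complex_def)
    then have "convex s" by (rule convex_simplex)
    then have "rel_interior s \<noteq> {}" using sne by (simp add: rel_interior_eq_empty)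
    then obtain z where "z \<in> rel_interior s" by blast
    then show ?thesis unfolding Pz_def using False by blast
  qed
  define c where "c s = (SOME z. Pz s z)" for s
  have cP: "Pz s (c s)" if "s \<in> K" "s \<noteq> {}" for s
    unfolding c_def by (rule someI_ex[OF ex[OF that]])
  interpret D: dsub K c
  proof
    show "simplicial_complex K" by (rule sc)
    fix s assume "s \<in> K" "s \<noteq> {}"
    then show "c s \<in> rel_interior s" using cP unfolding Pz_def by blast
  qed
  have main: "card (Q \<inter> rel_interior \<sigma>) \<le> N div 2" if \<sigma>: "\<sigma> \<in> Sd c K" "1 \<le> aff_dim \<sigma>" for \<sigma>
  proof -
    obtain F where F: "D.chainK F" "\<sigma> = convex hull (c ` F)" using \<sigma>(1) unfolding D.Sd_eq by blast
    have Fne: "F \<noteq> {}" using F(2) \<sigma>(2) by auto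
    from D.chainK_top_ex[OF F(1) Fne] obtain t where t_1: "t \<in> F" and t_2: "\<forall>s\<in>F. s \<subseteq> t" ..
    have t: "t \<in> F" "\<And>s. s \<in> F \<Longrightarrow> s \<subseteq> t" using t_1 t_2 by auto
    have Gne: "F - {t} \<noteq> {}"
    proof
      assume "F - {t} = {}"
      then have "F = {t}" using t(1) by blast
      then have "\<sigma> = {c t}" using F(2) by simp
      then show False using \<sigma>(2) by simp
    qed
    have G: "D.chainK (F - {t})" using D.chainK_sub[OF F(1)] by blast
    from D.chainK_top_ex[OF G Gne] obtain g where g_1: "g \<in> F - {t}" and g_2: "\<forall>s\<in>F - {t}. s \<subseteq> g" ..
    have g: "g \<in> F - {t}" "\<And>s. s \<in> F - {t} \<Longrightarrow> s \<subseteq> g" using g_1 g_2 by auto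
    have tK: "t \<in> K" "t \<noteq> {}" using D.chainK_mem[OF F(1) t(1)] by auto
    have gK: "g \<in> K" "g \<noteq> {}" using D.chainK_mem[OF F(1)] g(1) by auto
    have gt: "g face_of t" "g \<noteq> t" using D.below_top(1)[OF F(1) t, of g] g(1) by auto
    have "aff_dim g < aff_dim t" using face_of_aff_dim_lt[OF D.convexK[OF tK(1)] gt] .
    moreover have "aff_dim g \<ge> 0" using gK(2) by (metis aff_dim_negative_iff not_le)
    ultimately have at: "1 \<le> aff_dim t" by linarith
    have bound: "2 * card ((Q \<inter> rel_interior t) \<inter> pcone (c t) g) \<le> card (Q \<inter> rel_interior t)"
      using cP[OF tK] at gt gK(2) unfolding Pz_def by blast
    have "card (Q \<inter> rel_interior t) \<le> N" using cnt tK(1) at by blast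
    moreover have "Q \<inter> rel_interior \<sigma> \<subseteq> (Q \<inter> rel_interior t) \<inter> pcone (c t) g"
      using D.top_rel_interior[OF F(1) t] D.cone_lemma[OF F(1) t g] F(2) by blast
    then have "card (Q \<inter> rel_interior \<sigma>) \<le> card ((Q \<inter> rel_interior t) \<inter> pcone (c t) g)"
      using Q by (intro card_mono) auto
    ultimately show ?thesis using bound by linarith
  qed
  show ?thesis
    using D.cin main by blast
qed

lemma compose_bsd:
  "realises_iterated_bsd R (Suc 0) S1 \<Longrightarrow> realises_iterated_bsd S1 n S \<Longrightarrow>
   realises_iterated_bsd R (Suc n) S"
proof (induction n arbitrary: S)
  case 0 then show ?case by simp
next
  case (Suc n)
  then obtain R' where a: "realises_iterated_bsd S1 n R'" "derived_subdivision R' S" by auto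
  have "realises_iterated_bsd R (Suc n) R'" using Suc.IH[OF Suc.prems(1) a(1)] .
  then show ?case using a(2) by (metis realises_iterated_bsd.simps(2))
qed

lemma iter:
  fixes K :: "(real^2) set set"
  shows "simplicial_complex K \<Longrightarrow> finite Q \<Longrightarrow> Q \<subseteq> \<Union>K \<Longrightarrow>
    (\<forall>s\<in>K. 1 \<le> aff_dim s \<longrightarrow> card (Q \<inter> rel_interior s) \<le> 2 ^ m) \<Longrightarrow>
    \<exists>S. realises_iterated_bsd K (Suc m) S \<and> simplicial_complex S \<and> \<Union>S = \<Union>K \<and> Q \<subseteq> tri_vertices S"
proof (induction m arbitrary: K)
  case 0
  obtain c where c: "\<forall>s\<in>K. s \<noteq> {} \<longrightarrow> c s \<in> rel_interior s"
      "\<forall>\<sigma>\<in>Sd c K. 1 \<le> aff_dim \<sigma> \<longrightarrow> card (Q \<inter> rel_interior \<sigma>) \<le> 1 div 2"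
    using step[OF 0(1,2), of 1] 0(4) by auto
  interpret D: dsub K c using 0(1) c(1) by unfold_locales auto
  let ?S = "Sd c K"
  have r: "realises_iterated_bsd K (Suc 0) ?S" using D.derived_Sd by simp
  have vert: "Q \<subseteq> tri_vertices ?S"
  proof
    fix q assume q: "q \<in> Q"
    then have "q \<in> \<Union>?S" using 0(3) D.Sd_union by blast
    then obtain \<sigma> where "\<sigma> \<in> ?S" "q \<in> \<sigma>" by blast
    then obtain f where f: "f \<in> ?S" "q \<in> rel_interior f" using carrier[OF D.Sd_simplicial] by blast
    have "\<not> 1 \<le> aff_dim f"
    proof
      assume "1 \<le> aff_dim f"
      then have "card (Q \<inter> rel_interior f) \<le> 0" using c(2) f(1) by simp
      moreover have "Q \<inter> rel_interior f \<noteq> {}" using q f(2) by blast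
      ultimately show False using 0(2) by simp
    qed
    moreover have "f \<noteq> {}" using f(2) rel_interior_subset by blast
    then have "aff_dim f \<ge> 0" by (metis aff_dim_negative_iff not_le)
    ultimately have "aff_dim f = 0" by linarith
    then obtain x where "f = {x}" using aff_dim_eq_0 by blast
    then have "f = {q}" using f(2) by simp
    then show "q \<in> tri_vertices ?S" using f(1) by (simp add: tri_vertices_def)
  qed
  show ?case using r D.Sd_simplicial D.Sd_union vert by blast
next
  case (Suc m)
  obtain c where c: "\<forall>s\<in>K. s \<noteq> {} \<longrightarrow> c s \<in> rel_interior s"
      "\<forall>\<sigma>\<in>Sd c K. 1 \<le> aff_dim \<sigma> \<longrightarrow> card (Q \<inter> rel_interior \<sigma>) \<le> 2 ^ Suc m div 2"
    using step[OF Suc.prems(1,2), of "2 ^ Suc m"] Suc.prems(4) by auto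
  interpret D: dsub K c using Suc.prems(1) c(1) by unfold_locales auto
  let ?S1 = "Sd c K"
  have r1: "realises_iterated_bsd K (Suc 0) ?S1" using D.derived_Sd by simp
  have cnt: "\<forall>\<sigma>\<in>?S1. 1 \<le> aff_dim \<sigma> \<longrightarrow> card (Q \<inter> rel_interior \<sigma>) \<le> 2 ^ m" using c(2) by simp
  have "Q \<subseteq> \<Union>?S1" using Suc.prems(3) D.Sd_union by simp
  then obtain S where S: "realises_iterated_bsd ?S1 (Suc m) S" "simplicial_complex S" "\<Union>S = \<Union>?S1"
      "Q \<subseteq> tri_vertices S"
    using Suc.IH[OF D.Sd_simplicial Suc.prems(2) _ cnt] by blast
  have "realises_iterated_bsd K (Suc (Suc m)) S" by (rule compose_bsd[OF r1 S(1)])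
  then show ?case using S D.Sd_union by auto
qed

theorem mainTheorem19:
  fixes D :: "(real^2) set" and \<T> :: "(real^2) set set" and k :: nat and P :: "(real^2) set"
  assumes "euclidean_polygon D"
    and "straight_triangulation \<T> D"
    and "finite P" and "card P \<le> 2 ^ k" and "P \<subseteq> D"
  shows "\<exists>\<S>. realises_iterated_bsd \<T> (k + 1) \<S> \<and> straight_triangulation \<S> D
             \<and> P \<subseteq> tri_vertices \<S>"
proof -
  have sc: "simplicial_complex \<T>" and U: "\<Union>\<T> = D"
    using assms(2) by (auto simp: straight_triangulation_def)
  have cnt: "\<forall>s\<in>\<T>. 1 \<le> aff_dim s \<longrightarrow> card (P \<inter> rel_interior s) \<le> 2 ^ k"
  proof (intro ballI impI)
    fix s assume "s \<in> \<T>" "1 \<le> aff_dim s"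
    have "card (P \<inter> rel_interior s) \<le> card P" using assms(3) by (intro card_mono) auto
    then show "card (P \<inter> rel_interior s) \<le> 2 ^ k" using assms(4) by linarith
  qed
  obtain S where S: "realises_iterated_bsd \<T> (Suc k) S" "simplicial_complex S" "\<Union>S = \<Union>\<T>"
      "P \<subseteq> tri_vertices S"
    using iter[OF sc assms(3) _ cnt] assms(5) U by blast
  then show ?thesis using U by (auto simp: straight_triangulation_def)
qed


end
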